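(* Let $M\ge1$, let $\zeta_M$ be a primitive $M$-th root of unity, and let $f(x)\in\mathbb C[x]$ be monic with $f(0)\neq0$. Then $f(x)$ divides $f(x^k)$ in $\mathbb C[x]$ for all integers $k\ge1$ with $k\equiv1\pmod M$ if and only if $f(x)$ equals, up to a nonzero constant factor, $\operatorname{lcm}_{m\ge1,\,0\le j\le M-1}(\zeta_M^jx^m-1)^{h_{m,j}}$ for some integers $h_{m,j}\ge0$, only finitely many of which are nonzero. *)

theory Defs
  imports Complex_Main "HOL-Computational_Algebra.Polynomial_Factorial" "HOL-Computational_Algebra.Field_as_Ring"
begin

definition primitive_root_unity :: "nat \<Rightarrow> complex \<Rightarrow> bool" where
  "primitive_root_unity M z \<longleftrightarrow> 0 < M \<and> z ^ M = 1 \<and> (\<forall>d. 0 < d \<and> d < M \<longrightarrow> z ^ d \<noteq> 1)"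

end

theory Submission imports Defs "HOL-Computational_Algebra.Fundamental_Theorem_Algebra" begin

lemma roots_unity_powers:
  fixes w u :: complex
  assumes n: "n > 0" and w: "w ^ n = 1" and minim: "\<forall>d. 0 < d \<and> d < n \<longrightarrow> w ^ d \<noteq> 1"
    and u: "u ^ n = 1"
  shows "\<exists>i<n. u = w ^ i"
proof -
  have w0: "w \<noteq> 0" using w n by (auto simp: power_0_left)
  have inj: "inj_on (\<lambda>i. w ^ i) {..<n}"
  proof (rule inj_onI)
    fix i k assume i: "i \<in> {..<n}" and k: "k \<in> {..<n}" and e: "w ^ i = w ^ k"
    show "i = k"
    proof (rule ccontr)
      assume "i \<noteq> k"
      then consider "i < k" | "k < i" by linarith
      then show False
      proof cases
        case 1
        have "w ^ k = w ^ i * w ^ (k - i)" using 1 by (simp add: power_add[symmetric])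
        then have "w ^ (k - i) = 1" using e w0 by simp
        then show False using minim 1 k by auto
      next
        case 2
        have "w ^ i = w ^ k * w ^ (i - k)" using 2 by (simp add: power_add[symmetric])
        then have "w ^ (i - k) = 1" using e w0 by simp
        then show False using minim 2 i by auto
      qed
    qed
  qed
  have sub: "(\<lambda>i. w ^ i) ` {..<n} \<subseteq> {z. z ^ n = 1}"
    using w by (auto, metis power_mult mult.commute power_one)
  have "card ((\<lambda>i. w ^ i) ` {..<n}) = n" using card_image[OF inj] by simp
  also have "n = card {z::complex. z ^ n = 1}" using card_roots_unity_eq[OF n] by simp
  finally have "(\<lambda>i. w ^ i) ` {..<n} = {z. z ^ n = 1}"
    by (intro card_subset_eq sub) (use n finite_roots_unity in auto)
  then show ?thesis using u by auto
qed

lemma order_power_poly: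
  fixes p :: "'a::idom poly"
  assumes "p \<noteq> 0" shows "order a (p ^ n) = n * order a p"
  using assms by (induction n) (auto simp: order_mult)

lemma order_le_dvd:
  fixes p q :: "complex poly"
  assumes "p \<noteq> 0" "q \<noteq> 0" "\<And>a. order a p \<le> order a q"
  shows "p dvd q"
  using assms
proof (induction "degree p" arbitrary: p q)
  case 0
  then obtain c where "p = [:c:]" by (metis degree_eq_zeroE)
  then show ?case using 0 by (simp add: const_poly_dvd_iff dvd_field_iff)
next
  case (Suc n)
  have "\<not> constant (poly p)" using Suc(2) by (simp add: constant_degree)
  then obtain a where ra: "poly p a = 0" using fundamental_theorem_of_algebra by blast
  then have "[:-a,1:] dvd p" by (simp add: poly_eq_0_iff_dvd)
  then obtain p' where p': "p = [:-a,1:] * p'" by (elim dvdE)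
  have "order a p > 0" using ra Suc(3) by (simp add: order_gt_0_iff)
  then have "order a q > 0" using Suc(5)[of a] by linarith
  then have "poly q a = 0" using Suc(4) by (simp add: order_gt_0_iff)
  then have "[:-a,1:] dvd q" by (simp add: poly_eq_0_iff_dvd)
  then obtain q' where q': "q = [:-a,1:] * q'" by (elim dvdE)
  have p0: "p' \<noteq> 0" "q' \<noteq> 0" using p' q' Suc(3,4) by auto
  have "degree p = Suc (degree p')" unfolding p' using p0 by (subst degree_mult_eq) auto
  then have dp: "n = degree p'" using Suc(2) by simp
  have "\<And>b. order b p' \<le> order b q'"
  proof -
    fix b
    have "order b p = order b [:-a,1:] + order b p'" unfolding p' by (rule order_mult) (use Suc(3) p' in auto)
    moreover have "order b q = order b [:-a,1:] + order b q'" unfolding q' by (rule order_mult) (use Suc(4) q' in auto)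
    ultimately show "order b p' \<le> order b q'" using Suc(5)[of b] by simp
  qed
  then have "p' dvd q'" using Suc(1)[OF dp p0] by blast
  then show ?case unfolding p' q' by (rule mult_dvd_mono[OF dvd_refl])
qed

lemma order_le_1_pderiv:
  fixes p :: "complex poly"
  assumes "p \<noteq> 0" "poly (pderiv p) a \<noteq> 0"
  shows "order a p \<le> 1"
proof (cases "poly p a = 0")
  case True
  have "pderiv p \<noteq> 0" using assms(2) by auto
  then have "order a (pderiv p) = 0" using assms(2) by (simp add: order_eq_0_iff)
  then show ?thesis using order_pderiv[OF assms(1) True] by simp
next
  case False then show ?thesis by (simp add: order_0I)
qed

lemma pcompose_monom_monom: "pcompose (monom c m) (monom (1::'a::comm_ring_1) k) = monom c (m * k)"
proof -
  have "pcompose ([:0,1:] ^ m) q = q ^ m" for q :: "'a poly"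
    by (induction m) (auto simp: pcompose_mult pcompose_pCons pcompose_1)
  then show ?thesis by (simp add: monom_altdef pcompose_smult power_mult[symmetric] mult.commute)
qed

lemma pcompose_power_poly: "pcompose (p ^ n) r = (pcompose p r) ^ n"
  by (induction n) (auto simp: pcompose_mult pcompose_1)

lemma pcompose_dvd: "p dvd q \<Longrightarrow> pcompose p r dvd pcompose q r"
  by (elim dvdE) (simp add: pcompose_mult)


theorem lemma2:
  fixes M :: nat and z :: complex and f :: "complex poly"
  assumes "M \<ge> 1"
    and "primitive_root_unity M z"
    and "lead_coeff f = 1"
    and "poly f 0 \<noteq> 0"
  shows "(\<forall>k::nat. k \<ge> 1 \<and> k mod M = 1 mod M \<longrightarrow> f dvd pcompose f (monom 1 k)) \<longleftrightarrow>
    (\<exists>h :: nat \<Rightarrow> nat \<Rightarrow> nat.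
       finite {(m, j). m \<ge> 1 \<and> j < M \<and> h m j \<noteq> 0} \<and>
       (\<exists>c::complex. c \<noteq> 0 \<and>
          f = smult c (Lcm ((\<lambda>(m, j). (monom (z ^ j) m - 1) ^ h m j) ` ({1..} \<times> {..<M})))))"
proof -
  have zM: "z ^ M = 1" and zmin: "\<forall>d. 0 < d \<and> d < M \<longrightarrow> z ^ d \<noteq> 1" and M0: "0 < M"
    using assms(2) unfolding primitive_root_unity_def by auto
  have z0: "z \<noteq> 0" using zM M0 by (auto simp: power_0_left)
  have zmod: "z ^ n = z ^ (n mod M)" for n
  proof -
    have "z ^ n = z ^ (n mod M) * (z ^ M) ^ (n div M)"
      by (metis mod_mult_div_eq power_add power_mult)
    then show ?thesis using zM by simp
  qed
  have f0: "f \<noteq> 0" using assms(3) by auto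
  have poly_g: "poly (monom (z ^ j) m - 1) x = z^j * x^m - 1" for m j x by (simp add: poly_monom)
  have g0: "monom (z ^ j) m - 1 \<noteq> (0::complex poly)" if "m \<ge> 1" for m j
  proof
    assume "monom (z ^ j) m - 1 = (0::complex poly)"
    then have "poly (monom (z ^ j) m - 1) 0 = 0" by simp
    then show False using that poly_g[of j m 0] by (simp add: power_0_left)
  qed
  have gord: "order x (monom (z ^ j) m - 1) \<le> 1" if "m \<ge> 1" "x \<noteq> 0" for m j x
  proof (rule order_le_1_pderiv[OF g0[OF that(1)]])
    show "poly (pderiv (monom (z ^ j) m - 1)) x \<noteq> 0"
      using that z0 by (simp add: pderiv_diff pderiv_monom poly_monom)
  qed
  show ?thesis
  proof
    assume H: "\<forall>k::nat. k \<ge> 1 \<and> k mod M = 1 mod M \<longrightarrow> f dvd pcompose f (monom 1 k)"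
    show "\<exists>h :: nat \<Rightarrow> nat \<Rightarrow> nat.
       finite {(m, j). m \<ge> 1 \<and> j < M \<and> h m j \<noteq> 0} \<and>
       (\<exists>c::complex. c \<noteq> 0 \<and>
          f = smult c (Lcm ((\<lambda>(m, j). (monom (z ^ j) m - 1) ^ h m j) ` ({1..} \<times> {..<M}))))"
    proof -
    define R where "R = {a. poly f a = 0}"
    have finR: "finite R" using poly_roots_finite[OF f0] R_def by simp
    have R0: "a \<noteq> 0" if "a \<in> R" for a using assms(4) R_def that by auto
    have B: "order a f \<le> order (a^k) f" if a: "a \<noteq> 0" and k: "k \<ge> 1" "k mod M = 1 mod M" for a k
    proof -
      define X where "X = (monom 1 k :: complex poly)"
      have dX: "degree X > 0" using k by (simp add: X_def degree_monom_eq)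
      have fX0: "pcompose f X \<noteq> 0" using pcompose_eq_0_iff[OF dX] f0 by simp
      have "order a f \<le> order a (pcompose f X)" using H k fX0 dvd_imp_order_le unfolding X_def by blast
      also have "order a (pcompose f X) \<le> order (a^k) f"
      proof -
        define e where "e = order (a^k) f"
        obtain q where fq: "f = [:-(a^k),1:]^e * q" and nq: "\<not> [:-(a^k),1:] dvd q"
          using order_decomp[OF f0, of "a^k"] e_def by auto
        have pq: "poly q (a^k) \<noteq> 0" using nq by (simp add: poly_eq_0_iff_dvd)
        have q0: "q \<noteq> 0" using pq by auto
        define r where "r = pcompose [:-(a^k),1:] X"
        have fXe: "pcompose f X = r ^ e * pcompose q X"
          unfolding r_def by (subst fq) (simp add: pcompose_mult pcompose_power_poly)
        have r_eq: "r = X - [:a^k:]" unfolding r_def by (simp add: pcompose_pCons)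
        have pd: "poly (pderiv r) a \<noteq> 0"
          using a k unfolding r_eq X_def by (simp add: pderiv_diff pderiv_monom poly_monom)
        have r0: "r \<noteq> 0" using pd by auto
        have qX0: "pcompose q X \<noteq> 0" using pcompose_eq_0_iff[OF dX] q0 by simp
        have "order a (pcompose f X) = order a (r ^ e) + order a (pcompose q X)"
          unfolding fXe by (rule order_mult) (use r0 qX0 in simp)
        also have "order a (pcompose q X) = 0"
          by (rule order_0I) (simp add: poly_pcompose X_def poly_monom pq)
        also have "order a (r ^ e) = e * order a r" by (rule order_power_poly[OF r0])
        also have "order a r \<le> 1" by (rule order_le_1_pderiv[OF r0 pd])
        finally show ?thesis unfolding e_def by simp
      qed
      finally show ?thesis .
    qed
    have kmod: "(1+M*t) mod M = 1 mod M" for t by (metis mod_mult_self2 mult.commute)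
    have C: "\<exists>t>0. (a^M)^t = 1" if aR: "a \<in> R" for a
    proof -
      have rt: "a^(1+M*t) \<in> R" for t
      proof -
        have "order a f \<le> order (a^(1+M*t)) f" by (rule B) (use R0 aR kmod in auto)
        moreover have "order a f > 0" using aR f0 R_def order_gt_0_iff by auto
        ultimately show ?thesis using f0 R_def order_gt_0_iff by fastforce
      qed
      have "\<not> inj (\<lambda>t::nat. a^(1+M*t))"
      proof
        assume inj: "inj (\<lambda>t::nat. a^(1+M*t))"
        have "range (\<lambda>t::nat. a^(1+M*t)) \<subseteq> R" using rt by auto
        then have "finite (range (\<lambda>t::nat. a^(1+M*t)))" using finR finite_subset by auto
        then have "finite (UNIV::nat set)" using finite_imageD[OF _ inj] by blast
        then show False by simp
      qed
      then obtain t1 t2 where ne: "t1 \<noteq> t2" and eq: "a^(1+M*t1) = a^(1+M*t2)" unfolding inj_def by auto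
      then have "\<exists>s1 s2. s1 < s2 \<and> a^(1+M*s1) = a^(1+M*s2)" by (metis linorder_neqE_nat)
      then obtain s1 s2 where lt: "s1 < s2" and eq2: "a^(1+M*s1) = a^(1+M*s2)" by blast
      have e: "1+M*s2 = (1+M*s1) + M*(s2-s1)" using lt by (simp add: diff_mult_distrib2)
      have "a^(1+M*s2) = a^(1+M*s1) * (a^M)^(s2-s1)"
        by (subst e) (metis power_add power_mult)
      moreover have "a^(1+M*s1) \<noteq> 0" using R0[OF aR] by simp
      ultimately have "(a^M)^(s2-s1) = 1" using eq2 by simp
      then show ?thesis using lt by (intro exI[of _ "s2-s1"]) auto
    qed
    define P where "P = (\<lambda>a m j. m \<ge> 1 \<and> j < M \<and> z^j * a^m = 1 \<and> (\<forall>x. z^j * x^m = 1 \<longrightarrow> (\<exists>t. x = a^(1+M*t))))"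
    have D: "\<exists>m j. P a m j" if aR: "a \<in> R" for a
    proof -
      define b where "b = a^M"
      obtain t where t: "t > 0" "b^t = 1" using C[OF aR] b_def by auto
      define d where "d = (LEAST d. 0 < d \<and> b^d = 1)"
      have d: "0 < d" "b^d = 1" using LeastI[of "\<lambda>d. 0 < d \<and> b^d = 1" t] t d_def by auto
      have dmin: "\<forall>e. 0 < e \<and> e < d \<longrightarrow> b^e \<noteq> 1" using not_less_Least d_def by blast
      have a0: "a \<noteq> 0" using R0 aR by auto
      define c where "c = a^d"
      have "c^M = 1" unfolding c_def using d(2) b_def by (metis power_mult mult.commute)
      then have cM: "(inverse c)^M = 1" by (simp add: power_inverse)
      obtain j where j: "j < M" "inverse c = z^j" using roots_unity_powers[OF M0 zM zmin cM] by auto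
      have c0: "c \<noteq> 0" using a0 c_def by simp
      have zj: "z^j * a^d = 1" using j c0 c_def by (metis left_inverse)
      have "P a d j"
        unfolding P_def
      proof (intro conjI allI impI)
        show "d \<ge> 1" "j < M" "z^j*a^d = 1" using d j zj by auto
        fix x assume x: "z^j * x^d = 1"
        have "x^d = a^d" using x zj z0 by (metis mult_left_cancel zero_neq_one mult_zero_left)
        then have "(x / a)^d = 1" using a0 by (simp add: power_divide)
        then obtain i where "i < d" "x / a = b^i" using roots_unity_powers[OF d(1) d(2) dmin] by blast
        then have "x = a * b^i" using a0 by (simp add: field_simps)
        also have "a * b^i = a^(1+M*i)" by (simp add: b_def power_mult power_add)
        finally show "\<exists>t. x = a^(1+M*t)" by blast
      qed
      then show ?thesis by blast
    qed
    define sel where "sel = (\<lambda>a. SOME mj. P a (fst mj) (snd mj))"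
    have selP: "P a (fst (sel a)) (snd (sel a))" if "a \<in> R" for a
    proof -
      from D[OF that] obtain m j where "P a m j" by blast
      then have "P a (fst (m,j)) (snd (m,j))" by simp
      then show ?thesis unfolding sel_def by (rule someI)
    qed
    have F: "order a f \<le> order x f" if aR: "a \<in> R" and Pa: "P a m j" and zx: "z^j * x^m = 1" for a m j x
    proof -
      obtain t where "x = a^(1+M*t)" using Pa zx unfolding P_def by blast
      then show ?thesis using B[of a "1+M*t"] R0[OF aR] kmod by simp
    qed
    define h where "h = (\<lambda>m j. Max (insert 0 ((\<lambda>a. order a f) ` {a\<in>R. sel a = (m,j)})))"
    have finS: "finite ((\<lambda>a. order a f) ` {a\<in>R. sel a = (m,j)})" for m j using finR by simp
    have hmem: "\<exists>a\<in>R. sel a = (m,j) \<and> h m j = order a f" if "h m j \<noteq> 0" for m j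
    proof -
      have "h m j \<in> insert 0 ((\<lambda>a. order a f) ` {a\<in>R. sel a = (m,j)})"
        unfolding h_def by (rule Max_in) (use finS in auto)
      then show ?thesis using that by auto
    qed
    have hge: "order a f \<le> h m j" if "a \<in> R" "sel a = (m,j)" for a m j
      unfolding h_def by (rule Max_ge) (use finS that in auto)
    have hfin: "finite {(m,j). m \<ge> 1 \<and> j < M \<and> h m j \<noteq> 0}"
    proof (rule finite_subset[of _ "sel ` R"])
      show "{(m, j). m \<ge> 1 \<and> j < M \<and> h m j \<noteq> 0} \<subseteq> sel ` R"
      proof
        fix mj assume "mj \<in> {(m, j). m \<ge> 1 \<and> j < M \<and> h m j \<noteq> 0}"
        then obtain m j where mj: "mj = (m,j)" "h m j \<noteq> 0" by auto
        then obtain a where "a \<in> R" "sel a = (m,j)" using hmem by blast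
        then show "mj \<in> sel ` R" using mj by force
      qed
      show "finite (sel ` R)" using finR by simp
    qed
    define S where "S = (\<lambda>(m, j). (monom (z ^ j) m - (1::complex poly)) ^ h m j) ` ({1..} \<times> {..<M})"
    have LF: "Lcm S dvd f"
    proof (rule Lcm_least)
      fix p assume "p \<in> S"
      then obtain m j where mj: "m \<ge> 1" "j < M" and p: "p = (monom (z ^ j) m - 1) ^ h m j"
        unfolding S_def by auto
      show "p dvd f"
      proof (cases "h m j = 0")
        case True then show ?thesis using p by simp
      next
        case False
        then obtain a where aR: "a \<in> R" and sa: "sel a = (m,j)" and ha: "h m j = order a f"
          using hmem by blast
        have Pa: "P a m j" using selP[OF aR] sa by simp
        show ?thesis unfolding p
        proof (rule order_le_dvd)
          show "(monom (z ^ j) m - 1) ^ h m j \<noteq> 0" using g0[OF mj(1)] by simp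
          show "f \<noteq> 0" by (rule f0)
          fix x
          show "order x ((monom (z ^ j) m - 1) ^ h m j) \<le> order x f"
          proof (cases "poly (monom (z ^ j) m - 1) x = 0")
            case True
            then have zx: "z^j * x^m = 1" using poly_g by simp
            then have x0: "x \<noteq> 0" using mj(1) by (auto simp: power_0_left)
            have "order x ((monom (z ^ j) m - 1) ^ h m j) = h m j * order x (monom (z ^ j) m - 1)"
              by (rule order_power_poly[OF g0[OF mj(1)]])
            also have "\<dots> \<le> h m j * 1" using gord[OF mj(1) x0] by (intro mult_le_mono2)
            also have "\<dots> \<le> order x f" using ha F[OF aR Pa zx] by simp
            finally show ?thesis .
          next
            case False
            then have "order x (monom (z ^ j) m - 1) = 0" by (rule order_0I)
            then show ?thesis using order_power_poly[OF g0[OF mj(1)]] by simp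
          qed
        qed
      qed
    qed
    have L0: "Lcm S \<noteq> 0" using LF f0 by auto
    have FL: "f dvd Lcm S"
    proof (rule order_le_dvd[OF f0 L0])
      fix x
      show "order x f \<le> order x (Lcm S)"
      proof (cases "poly f x = 0")
        case False then show ?thesis by (simp add: order_0I)
      next
        case True
        then have xR: "x \<in> R" using R_def by simp
        obtain m j where smj: "sel x = (m,j)" by (cases "sel x")
        have Px: "P x m j" using selP[OF xR] smj by simp
        then have mj: "m \<ge> 1" "j < M" "z^j * x^m = 1" unfolding P_def by auto
        have inS: "(monom (z ^ j) m - 1) ^ h m j \<in> S" unfolding S_def using mj by force
        have pg: "poly (monom (z ^ j) m - 1) x = 0" using mj poly_g by simp
        have og: "order x (monom (z ^ j) m - 1) \<ge> 1"
          using order_gt_0_iff[OF g0[OF mj(1)], of x] pg by (simp only: Suc_le_eq One_nat_def)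
        have "order x f \<le> h m j" using hge[OF xR smj] .
        also have "\<dots> \<le> h m j * order x (monom (z ^ j) m - 1)" using og by simp
        also have "\<dots> = order x ((monom (z ^ j) m - 1) ^ h m j)"
          by (rule order_power_poly[OF g0[OF mj(1)], symmetric])
        also have "\<dots> \<le> order x (Lcm S)"
          by (rule dvd_imp_order_le[OF L0]) (rule dvd_Lcm[OF inS])
        finally show ?thesis .
      qed
    qed
    have nf: "normalize f = f"
      by (simp add: normalize_poly_eq_map_poly assms(3) map_poly_idI)
    have "f = Lcm S" by (rule associated_eqI[OF FL LF nf normalize_Lcm])
    then show ?thesis using hfin unfolding S_def by (intro exI[of _ h] conjI exI[of _ 1]) auto
    qed
  next
    assume "\<exists>h :: nat \<Rightarrow> nat \<Rightarrow> nat.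
       finite {(m, j). m \<ge> 1 \<and> j < M \<and> h m j \<noteq> 0} \<and>
       (\<exists>c::complex. c \<noteq> 0 \<and>
          f = smult c (Lcm ((\<lambda>(m, j). (monom (z ^ j) m - 1) ^ h m j) ` ({1..} \<times> {..<M}))))"
    then obtain h c where fL: "f = smult c (Lcm ((\<lambda>(m, j). (monom (z ^ j) m - 1) ^ h m j) ` ({1..} \<times> {..<M})))"
      by blast
    define S where "S = (\<lambda>(m, j). (monom (z ^ j) m - (1::complex poly)) ^ h m j) ` ({1..} \<times> {..<M})"
    show "\<forall>k::nat. k \<ge> 1 \<and> k mod M = 1 mod M \<longrightarrow> f dvd pcompose f (monom 1 k)"
    proof (intro allI impI)
      fix k :: nat assume k: "k \<ge> 1 \<and> k mod M = 1 mod M"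
      define X where "X = (monom 1 k :: complex poly)"
      have gdvd: "monom (z ^ j) m - 1 dvd pcompose (monom (z ^ j) m - 1) X" for m j
      proof -
        have jk: "(j * k) mod M = j mod M"
          using k by (metis mod_mult_right_eq mult.right_neutral)
        have "(z ^ j) ^ k = z ^ j"
        proof -
          have "(z ^ j) ^ k = z ^ (j * k)" by (simp add: power_mult)
          also have "\<dots> = z ^ ((j * k) mod M)" by (rule zmod)
          also have "\<dots> = z ^ j" using jk zmod[of j] by simp
          finally show ?thesis .
        qed
        then have "pcompose (monom (z ^ j) m - 1) X = (monom (z ^ j) m) ^ k - 1"
          unfolding X_def by (simp add: pcompose_diff pcompose_monom_monom pcompose_1 monom_power)
        also have "\<dots> = (monom (z ^ j) m - 1) * (\<Sum>i<k. (monom (z ^ j) m)^i)"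
          by (rule power_diff_1_eq)
        finally show ?thesis by simp
      qed
      have "Lcm S dvd pcompose (Lcm S) X"
      proof (rule Lcm_least)
        fix p assume "p \<in> S"
        then obtain m j where p: "p = (monom (z ^ j) m - 1) ^ h m j" unfolding S_def by auto
        have "p dvd pcompose p X" unfolding p pcompose_power_poly by (rule dvd_power_same[OF gdvd])
        also have "pcompose p X dvd pcompose (Lcm S) X"
          by (rule pcompose_dvd) (use \<open>p \<in> S\<close> in \<open>rule dvd_Lcm\<close>)
        finally show "p dvd pcompose (Lcm S) X" .
      qed
      then obtain r where r: "pcompose (Lcm S) X = Lcm S * r" by (elim dvdE)
      have "pcompose f X = f * r" using fL r unfolding S_def[symmetric] by (simp add: pcompose_smult)
      then show "f dvd pcompose f (monom 1 k)" unfolding X_def by simp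
    qed
  qed
qed

end
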